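(* Let $\mathcal{C}$, $C_0=\{c_0\}$, $f$ and $r$ be as in the context. Fix $\lambda\in[0,1]$, a random trip-detail variable $X$ with distribution $P$, a real-valued measurable function $u(X)$, and a conditional distribution of the realized fare $p'\ge0$ given $X$ (all expectations below assumed finite). Let $V^*:\mathcal C\to\mathbb{R}$ and $V^*_c(p',C)$ satisfy, for all $C\in\mathcal C$ and $p'\ge0$, $$V^*_c(p',C)=\max_{c\in C}\{r(p',c)+V^*(f(C,c))\},$$ $$V^*(C)=V^*(f(C))+\lambda\,\mathbb{E}_X\Big[\max\Big(u(X)+\mathbb{E}_{p'\mid X}[V^*_c(p',C)]-V^*(f(C)),\,0\Big)-\max\big(u(X),0\big)\Big],\qquad V^*(C_0)=0.$$ For $C\in\mathcal C$ and a function $g$ of the fare, define $$\mathbb{E}_{x',p'\mid C}\big[I(x'=1)\,g(p')\big]:=\lambda\,\mathbb{E}_X\Big[I\Big(u(X)+\mathbb{E}_{p'\mid X}[V^*_c(p',C)]-V^*(f(C))\ge0\Big)\,\mathbb{E}_{p'\mid X}[g(p')]\Big]$$ (so for $C=C_0$ the indicator is $I(u(X)\ge0)$). Let $V^L,V^U:\mathcal C\to\mathbb{R}$ satisfy $V^L(C_0)=V^U(C_0)=0$ and, for all $C\in\mathcal C$, $$V^L(C)=V^L(f(C))+\mathbb{E}_{x',p'\mid C_0}\big[I(x'=1)\,(V^L_c(p',C)-V^L(f(C)))\big],\quad V^L_c(p',C)=\max_{c\in C}[r(p',c)+V^L(f(C,c))],$$ $$V^U(C)=V^U(f(C))+\mathbb{E}_{x',p'\mid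 C}\big[I(x'=1)\,(V^U_c(p',C)-V^U(f(C)))\big],\quad V^U_c(p',C)=\max_{c\in C}[r(p',c)+V^U(f(C,c))].$$ Then $V^L(C)\le V^*(C)\le V^U(C)$ for all $C\in\mathcal C$.
   Context: A coupon group is a triple $c=\langle v,T,n\rangle\in\mathbb{R}\times\mathbb{N}\times\mathbb{N}^+$ (face value $v$, remaining time to expiration $T$, number of coupons $n$). The default (zero-valued) group is $c_0=\langle 0,0,1\rangle$. A coupon set is a finite set of coupon groups containing $c_0$ in which no two groups have the same pair $(v,T)$; $\mathcal C$ is the set of all coupon sets and $C_0=\{c_0\}$. For a group, $f_c(\langle v,T,n\rangle)=\langle v,T-1,n\rangle$ if $v>0$, $n>0$ and $T\ge 1$, and $f_c(\langle v,T,n\rangle)=c_0$ otherwise. For $C\in\mathcal C$ and $c=\langle v,T,n\rangle\in C$, $f(C,c)=\{f_c(c'):c'\in C\setminus\{c\}\}\cup\{f_c(\langle v,T,n-1\rangle)\}$ and $f(C):=f(C,c_0)$. The redemption value is $r(p',\langle v,T,n\rangle)=\min(v,p')$ for a realized fare $p'\ge 0$. $I(\cdot)$ is the indicator function. $\mathbb{E}_X$ is expectation over $X\sim P$ and $\mathbb{E}_{p'\mid X}$ over the realized fare given $X$. Interpretation: $\lambda$ is the per-time-step probability of a trip demand, $u(X)$ the utility gain from choosing the target mobility service, $V^*$ the optimal (undiscounted) net value of a coupon set, and $x'$ the indicator that a trip is served by the target service in the time step under the optimal policy. *)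

theory Defs
  imports "HOL-Probability.Probability"
begin

type_synonym cgroup = "real \<times> nat \<times> nat"
type_synonym cset = "cgroup set"

definition c0 :: cgroup where "c0 = (0, 0, 1)"

definition C0 :: cset where "C0 = {c0}"

definition coupon_set :: "cset \<Rightarrow> bool" where
  "coupon_set C \<longleftrightarrow> finite C \<and> c0 \<in> C \<and> (\<forall>(v,T,n)\<in>C. n > 0) \<and>
     (\<forall>c\<in>C. \<forall>c'\<in>C. (fst c, fst (snd c)) = (fst c', fst (snd c')) \<longrightarrow> c = c')"

fun fc :: "cgroup \<Rightarrow> cgroup" where
  "fc (v, T, n) = (if v > 0 \<and> n > 0 \<and> T \<ge> 1 then (v, T - 1, n) else c0)"

fun fCc :: "cset \<Rightarrow> cgroup \<Rightarrow> cset" where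
  "fCc C (v, T, n) = fc ` (C - {(v, T, n)}) \<union> {fc (v, T, n - 1)}"

definition fC :: "cset \<Rightarrow> cset" where "fC C = fCc C c0"

fun redeem :: "real \<Rightarrow> cgroup \<Rightarrow> real" where
  "redeem p (v, T, n) = min v p"

definition Vc :: "(cset \<Rightarrow> real) \<Rightarrow> real \<Rightarrow> cset \<Rightarrow> real" where
  "Vc V p C = Max ((\<lambda>c. redeem p c + V (fCc C c)) ` C)"

text \<open>E_{x',p'|C}[I(x'=1) g(p')] with respect to the optimal value Vs.\<close>
definition Ex1 :: "real \<Rightarrow> 'x measure \<Rightarrow> ('x \<Rightarrow> real measure) \<Rightarrow> ('x \<Rightarrow> real)
    \<Rightarrow> (cset \<Rightarrow> real) \<Rightarrow> cset \<Rightarrow> (real \<Rightarrow> real) \<Rightarrow> real" where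
  "Ex1 lam P K u Vs C g =
     lam * (\<integral>x. (if u x + (\<integral>p. Vc Vs p C \<partial>K x) - Vs (fC C) \<ge> 0 then 1 else 0)
                 * (\<integral>p. g p \<partial>K x) \<partial>P)"

end

theory Submission imports Defs begin

lemma fc_alt: "fc c = (if fst c > 0 \<and> snd (snd c) > 0 \<and> fst (snd c) \<ge> 1
   then (fst c, fst (snd c) - 1, snd (snd c)) else c0)"
  by (cases c) auto

lemma fCc_alt: "fCc C c = fc ` (C - {c}) \<union> {fc (fst c, fst (snd c), snd (snd c) - 1)}"
  by (cases c) auto

definition wt :: "cgroup \<Rightarrow> nat" where
  "wt c = (if c = c0 then 0 else Suc (fst (snd c)))"

definition mu :: "cset \<Rightarrow> nat" where "mu C = sum wt C"

lemma wt_fc_le: "wt (fc d) \<le> wt d"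
  by (auto simp: fc_alt wt_def c0_def)

lemma wt_fc_less: "d \<noteq> c0 \<Longrightarrow> wt (fc d) < wt d"
  by (auto simp: fc_alt wt_def c0_def)

lemma wt_e_le: "wt (fc (fst c, fst (snd c), snd (snd c) - 1)) \<le> wt c"
  by (auto simp: fc_alt wt_def c0_def)

lemma wt_e_less: "c \<noteq> c0 \<Longrightarrow> wt (fc (fst c, fst (snd c), snd (snd c) - 1)) < wt c"
  by (cases c) (auto simp: fc_alt wt_def c0_def)

lemma mu_less:
  assumes cs: "coupon_set C" and c: "c \<in> C" and ne: "C \<noteq> C0"
  shows "mu (fCc C c) < mu C"
proof -
  have fin: "finite C" and c0C: "c0 \<in> C" using cs by (auto simp: coupon_set_def)
  obtain d where d: "d \<in> C" "d \<noteq> c0" using ne c0C unfolding C0_def by blast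
  let ?e = "fc (fst c, fst (snd c), snd (snd c) - 1)"
  have 1: "mu (fCc C c) \<le> sum wt (fc ` (C - {c})) + wt ?e"
    unfolding mu_def fCc_alt using fin
    using sum_Un_nat[of "fc ` (C - {c})" "{?e}" wt] fin by simp
  have 2: "sum wt (fc ` (C - {c})) \<le> (\<Sum>x\<in>C-{c}. wt (fc x))"
    using sum_image_le[of "C - {c}" wt fc] fin by (simp add: o_def)
  have 3: "(\<Sum>x\<in>C-{c}. wt (fc x)) + wt ?e < (\<Sum>x\<in>C-{c}. wt x) + wt c"
  proof (cases "c = c0")
    case True
    then have "d \<in> C - {c}" using d by auto
    then have "(\<Sum>x\<in>C-{c}. wt (fc x)) < (\<Sum>x\<in>C-{c}. wt x)"
      using fin wt_fc_less[OF d(2)] wt_fc_le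
      by (intro sum_strict_mono_ex1) auto
    then show ?thesis using wt_e_le[of c] by linarith
  next
    case False
    have "(\<Sum>x\<in>C-{c}. wt (fc x)) \<le> (\<Sum>x\<in>C-{c}. wt x)" by (intro sum_mono wt_fc_le)
    then show ?thesis using wt_e_less[OF False] by linarith
  qed
  have 4: "(\<Sum>x\<in>C-{c}. wt x) + wt c = mu C" unfolding mu_def using fin c by (simp add: sum.remove)
  from 1 2 3 4 show ?thesis by linarith
qed

lemma fCc_src:
  assumes "a \<in> fCc C c" "a \<noteq> c0" "c \<in> C"
  shows "fst a > 0 \<and> (\<exists>d\<in>C. fst d = fst a \<and> fst (snd d) = Suc (fst (snd a)) \<and>
           ((d \<noteq> c \<and> snd (snd a) = snd (snd d)) \<or> (d = c \<and> snd (snd a) = snd (snd c) - 1)))"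
proof -
  from assms(1) consider (img) d where "d \<in> C" "d \<noteq> c" "a = fc d"
    | (e) "a = fc (fst c, fst (snd c), snd (snd c) - 1)"
    unfolding fCc_alt by blast
  then show ?thesis
  proof cases
    case img
    then have "fst d > 0 \<and> snd (snd d) > 0 \<and> fst (snd d) \<ge> 1 \<and> a = (fst d, fst (snd d) - 1, snd (snd d))"
      using assms(2) by (simp add: fc_alt split: if_splits)
    then show ?thesis using img by (intro conjI bexI[of _ d]) auto
  next
    case e
    then have "fst c > 0 \<and> fst (snd c) \<ge> 1 \<and> a = (fst c, fst (snd c) - 1, snd (snd c) - 1)"
      using assms(2) by (simp add: fc_alt split: if_splits)
    then show ?thesis using assms(3) by (intro conjI bexI[of _ c]) auto
  qed
qed

lemma cs_fCc:
  assumes cs: "coupon_set C" and c: "c \<in> C"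
  shows "coupon_set (fCc C c)"
proof -
  have fin: "finite C" and c0C: "c0 \<in> C" and pos: "\<And>v T n. (v,T,n) \<in> C \<Longrightarrow> n > 0"
    and uq: "\<And>a b. a \<in> C \<Longrightarrow> b \<in> C \<Longrightarrow> fst a = fst b \<Longrightarrow> fst (snd a) = fst (snd b) \<Longrightarrow> a = b"
    using cs unfolding coupon_set_def by fastforce+
  show ?thesis
    unfolding coupon_set_def
  proof (intro conjI)
    show "finite (fCc C c)" using fin by (simp add: fCc_alt)
    show "c0 \<in> fCc C c"
    proof (cases "c = c0")
      case True then show ?thesis by (simp add: fCc_alt fc_alt c0_def)
    next
      case False then have "c0 \<in> C - {c}" using c0C by auto
      then have "fc c0 \<in> fc ` (C - {c})" by blast
      then show ?thesis by (simp add: fCc_alt fc_alt c0_def)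
    qed
    show "\<forall>(v, T, n)\<in>fCc C c. 0 < n"
    proof (intro ballI, clarify)
      fix v T n assume "(v, T, n) \<in> fCc C c"
      then consider (img) d where "d \<in> C" "(v,T,n) = fc d" | (e) "(v,T,n) = fc (fst c, fst (snd c), snd (snd c) - 1)"
        unfolding fCc_alt by blast
      then show "0 < n"
      proof cases
        case img then show ?thesis using pos[of "fst d" "fst (snd d)" "snd (snd d)"]
          by (auto simp: fc_alt c0_def split: if_splits)
      next
        case e then show ?thesis by (auto simp: fc_alt c0_def split: if_splits)
      qed
    qed
    show "\<forall>a\<in>fCc C c. \<forall>b\<in>fCc C c. (fst a, fst (snd a)) = (fst b, fst (snd b)) \<longrightarrow> a = b"
    proof (intro ballI impI)
      fix a b assume a: "a \<in> fCc C c" and b: "b \<in> fCc C c"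
        and ab: "(fst a, fst (snd a)) = (fst b, fst (snd b))"
      show "a = b"
      proof (cases "a = c0 \<or> b = c0")
        case True
        then show ?thesis
        proof
          assume a0: "a = c0"
          show ?thesis
          proof (rule ccontr)
            assume "a \<noteq> b"
            then have "b \<noteq> c0" using a0 by simp
            then have "fst b > 0" using fCc_src[OF b _ c] by blast
            then show False using ab a0 by (simp add: c0_def)
          qed
        next
          assume b0: "b = c0"
          show ?thesis
          proof (rule ccontr)
            assume "a \<noteq> b"
            then have "a \<noteq> c0" using b0 by simp
            then have "fst a > 0" using fCc_src[OF a _ c] by blast
            then show False using ab b0 by (simp add: c0_def)
          qed
        qed
      next
        case False
        then have na: "a \<noteq> c0" and nb: "b \<noteq> c0" by auto
        obtain da where da: "da \<in> C" "fst da = fst a" "fst (snd da) = Suc (fst (snd a))"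
          "(da \<noteq> c \<and> snd (snd a) = snd (snd da)) \<or> (da = c \<and> snd (snd a) = snd (snd c) - 1)"
          using fCc_src[OF a na c] by blast
        obtain db where db: "db \<in> C" "fst db = fst b" "fst (snd db) = Suc (fst (snd b))"
          "(db \<noteq> c \<and> snd (snd b) = snd (snd db)) \<or> (db = c \<and> snd (snd b) = snd (snd c) - 1)"
          using fCc_src[OF b nb c] by blast
        have "da = db" using uq[OF da(1) db(1)] da(2,3) db(2,3) ab by simp
        then have "snd (snd a) = snd (snd b)" using da(4) db(4) by auto
        then show ?thesis using ab by (simp add: prod_eq_iff)
      qed
    qed
  qed
qed


lemma redeem_alt: "redeem p c = min (fst c) p"
  by (cases c) auto

definition vb :: "(cset \<Rightarrow> real) \<Rightarrow> cset \<Rightarrow> real" where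
  "vb V C = (\<Sum>c\<in>C. \<bar>fst c\<bar> + \<bar>V (fCc C c)\<bar>)"

lemma vb_nonneg[simp]: "0 \<le> vb V C"
  by (simp add: vb_def sum_nonneg)

lemma Vc_bound:
  assumes "finite C" "C \<noteq> {}" "0 \<le> p"
  shows "\<bar>Vc V p C\<bar> \<le> vb V C"
proof -
  have "Vc V p C \<in> (\<lambda>c. redeem p c + V (fCc C c)) ` C"
    unfolding Vc_def using assms by (intro Max_in) auto
  then obtain c where c: "c \<in> C" "Vc V p C = redeem p c + V (fCc C c)" by blast
  have "\<bar>redeem p c\<bar> \<le> \<bar>fst c\<bar>" using assms(3) by (auto simp: redeem_alt)
  then have "\<bar>Vc V p C\<bar> \<le> \<bar>fst c\<bar> + \<bar>V (fCc C c)\<bar>" using c by linarith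
  also have "\<dots> \<le> vb V C" unfolding vb_def
    by (rule member_le_sum[where f="\<lambda>c. \<bar>fst c\<bar> + \<bar>V (fCc C c)\<bar>"]) (use c assms in auto)
  finally show ?thesis .
qed

lemma Vc_meas:
  assumes "finite C"
  shows "(\<lambda>p. Vc V p C) \<in> borel_measurable borel"
  unfolding Vc_def redeem_alt using assms by measurable

lemma Vc_mono:
  assumes "finite C" "C \<noteq> {}" "\<forall>c\<in>C. V (fCc C c) \<le> W (fCc C c)"
  shows "Vc V p C \<le> Vc W p C"
  unfolding Vc_def
proof (subst Max_le_iff)
  show "finite ((\<lambda>c. redeem p c + V (fCc C c)) ` C)" using assms by simp
  show "(\<lambda>c. redeem p c + V (fCc C c)) ` C \<noteq> {}" using assms by simp
  show "\<forall>a\<in>(\<lambda>c. redeem p c + V (fCc C c)) ` C. a \<le> Max ((\<lambda>c. redeem p c + W (fCc C c)) ` C)"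
  proof
    fix a assume "a \<in> (\<lambda>c. redeem p c + V (fCc C c)) ` C"
    then obtain c where c: "c \<in> C" "a = redeem p c + V (fCc C c)" by blast
    have "a \<le> redeem p c + W (fCc C c)" using c assms(3) by auto
    also have "\<dots> \<le> Max ((\<lambda>c. redeem p c + W (fCc C c)) ` C)"
      using assms c by (intro Max_ge) auto
    finally show "a \<le> Max ((\<lambda>c. redeem p c + W (fCc C c)) ` C)" .
  qed
qed

lemma K_facts:
  assumes K: "K \<in> measurable P (prob_algebra borel)" and x: "x \<in> space P"
  shows "prob_space (K x)" "sets (K x) = sets borel"
  using measurable_space[OF K x] by (auto simp: space_prob_algebra)

lemma EK_meas:
  assumes K: "K \<in> measurable P (prob_algebra borel)" and g: "(g::real\<Rightarrow>real) \<in> borel_measurable borel"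
  shows "(\<lambda>x. \<integral>p. g p \<partial>K x) \<in> borel_measurable P"
proof -
  have 1: "K \<in> P \<rightarrow>\<^sub>M subprob_algebra borel" by (rule measurable_prob_algebraD[OF K])
  have 2: "(\<lambda>M. integral\<^sup>L M g) \<in> subprob_algebra borel \<rightarrow>\<^sub>M borel"
    by (rule integral_measurable_subprob_algebra) (rule g)
  show ?thesis using measurable_comp[OF 1 2] by (simp add: o_def)
qed

lemma EK_int:
  assumes K: "K \<in> measurable P (prob_algebra borel)" and x: "x \<in> space P"
    and nn: "AE p in K x. 0 \<le> p" and C: "finite C" "C \<noteq> {}"
  shows "integrable (K x) (\<lambda>p. Vc V p C)" "\<bar>\<integral>p. Vc V p C \<partial>K x\<bar> \<le> vb V C"
    "(\<integral>p. Vc V p C - a \<partial>K x) = (\<integral>p. Vc V p C \<partial>K x) - a"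
proof -
  interpret prob_space "K x" by (rule K_facts[OF K x])
  have sets: "sets (K x) = sets borel" by (rule K_facts[OF K x])
  have meas: "(\<lambda>p. Vc V p C) \<in> borel_measurable (K x)"
    using Vc_meas[OF C(1)] by (simp add: measurable_cong_sets[OF sets refl])
  have bd: "AE p in K x. norm (Vc V p C) \<le> vb V C"
    using nn by eventually_elim (use Vc_bound[OF C] in auto)
  show int: "integrable (K x) (\<lambda>p. Vc V p C)"
    by (rule integrable_const_bound[OF bd meas])
  have "\<bar>\<integral>p. Vc V p C \<partial>K x\<bar> \<le> (\<integral>p. norm (Vc V p C) \<partial>K x)"
    using integral_norm_bound[of "K x" "\<lambda>p. Vc V p C"] by simp
  also have "\<dots> \<le> (\<integral>p. vb V C \<partial>K x)"
    by (rule integral_mono_AE) (use int bd in auto)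
  also have "\<dots> = vb V C" by (simp add: prob_space)
  finally show "\<bar>\<integral>p. Vc V p C \<partial>K x\<bar> \<le> vb V C" .
  show "(\<integral>p. Vc V p C - a \<partial>K x) = (\<integral>p. Vc V p C \<partial>K x) - a"
    using int by (simp add: prob_space)
qed

lemma bdd_int:
  assumes "prob_space P" "f \<in> borel_measurable P" "\<And>x. x \<in> space P \<Longrightarrow> \<bar>f x\<bar> \<le> (B::real)"
  shows "integrable P f"
proof -
  interpret prob_space P by fact
  show ?thesis by (rule integrable_const_bound[where B=B]) (use assms in auto)
qed

lemma h_lower: "(if 0 \<le> (u::real) then 1 else 0) * A \<le> max (u + A) 0 - max u 0"
  by (auto simp: max_def)
lemma h_upper: "max ((u::real) + A) 0 - max u 0 \<le> (if 0 \<le> u + A then 1 else 0) * A"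
  by (auto simp: max_def)

lemma h_abs: "\<bar>max ((u::real) + A) 0 - max u 0\<bar> \<le> \<bar>A\<bar>"
  by (auto simp: max_def)

lemma fC_C0: "fC C0 = C0"
  by (simp add: fC_def C0_def c0_def)

lemma Vc_C0: "Vc V p C0 = min 0 p + V C0"
  by (simp add: Vc_def C0_def c0_def fC_C0[unfolded fC_def C0_def c0_def])

theorem proposition2:
  fixes lam :: real and P :: "'x measure" and K :: "'x \<Rightarrow> real measure"
    and u :: "'x \<Rightarrow> real" and Vs VL VU :: "cset \<Rightarrow> real"
  assumes lam: "0 \<le> lam" "lam \<le> 1"
    and P: "prob_space P"
    and u: "u \<in> borel_measurable P"
    and K: "K \<in> measurable P (prob_algebra borel)"
    and fare_nonneg: "\<forall>x\<in>space P. AE p in K x. 0 \<le> p"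
    and Vs_C0: "Vs C0 = 0"
    and Vs_eq: "\<forall>C. coupon_set C \<longrightarrow>
        Vs C = Vs (fC C) + lam * (\<integral>x. max (u x + (\<integral>p. Vc Vs p C \<partial>K x) - Vs (fC C)) 0
                                         - max (u x) 0 \<partial>P)"
    and VL_C0: "VL C0 = 0"
    and VL_eq: "\<forall>C. coupon_set C \<longrightarrow>
        VL C = VL (fC C) + Ex1 lam P K u Vs C0 (\<lambda>p. Vc VL p C - VL (fC C))"
    and VU_C0: "VU C0 = 0"
    and VU_eq: "\<forall>C. coupon_set C \<longrightarrow>
        VU C = VU (fC C) + Ex1 lam P K u Vs C (\<lambda>p. Vc VU p C - VU (fC C))"
  shows "\<forall>C. coupon_set C \<longrightarrow> VL C \<le> Vs C \<and> Vs C \<le> VU C"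
proof (intro allI impI)
  interpret PS: prob_space P by (rule P)
  fix C0' assume "coupon_set C0'"
  then show "VL C0' \<le> Vs C0' \<and> Vs C0' \<le> VU C0'"
  proof (induction C0' rule: measure_induct_rule[of mu])
    case (less C)
    note cs = less.prems
    show ?case
    proof (cases "C = C0")
      case True then show ?thesis using Vs_C0 VL_C0 VU_C0 by simp
    next
      case ne0: False
      have fin: "finite C" and c0C: "c0 \<in> C" using cs by (auto simp: coupon_set_def)
      have ne: "C \<noteq> {}" using c0C by auto
      have IH: "VL (fCc C c) \<le> Vs (fCc C c) \<and> Vs (fCc C c) \<le> VU (fCc C c)" if "c \<in> C" for c
        using less.IH[OF mu_less[OF cs that ne0] cs_fCc[OF cs that]] .
      define F where "F = fC C"
      have IHF: "VL F \<le> Vs F" "Vs F \<le> VU F" using IH[OF c0C] unfolding F_def fC_def by auto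
      define ES where "ES x = (\<integral>p. Vc Vs p C \<partial>K x)" for x
      define EU where "EU x = (\<integral>p. Vc VU p C \<partial>K x)" for x
      define EL where "EL x = (\<integral>p. Vc VL p C \<partial>K x)" for x
      have ES_m: "ES \<in> borel_measurable P" unfolding ES_def by (rule EK_meas[OF K Vc_meas[OF fin]])
      have EU_m: "EU \<in> borel_measurable P" unfolding EU_def by (rule EK_meas[OF K Vc_meas[OF fin]])
      have EL_m: "EL \<in> borel_measurable P" unfolding EL_def by (rule EK_meas[OF K Vc_meas[OF fin]])
      have ES_b: "\<bar>ES x\<bar> \<le> vb Vs C" if "x \<in> space P" for x
        unfolding ES_def using EK_int(2)[OF K that _ fin ne] fare_nonneg that by blast
      have EU_b: "\<bar>EU x\<bar> \<le> vb VU C" if "x \<in> space P" for x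
        unfolding EU_def using EK_int(2)[OF K that _ fin ne] fare_nonneg that by blast
      have EL_b: "\<bar>EL x\<bar> \<le> vb VL C" if "x \<in> space P" for x
        unfolding EL_def using EK_int(2)[OF K that _ fin ne] fare_nonneg that by blast
      have ES_EU: "ES x \<le> EU x" if x: "x \<in> space P" for x
      proof -
        interpret prob_space "K x" by (rule K_facts[OF K x])
        show ?thesis unfolding ES_def EU_def
          by (rule integral_mono) (use EK_int(1)[OF K x _ fin ne] fare_nonneg x
              Vc_mono[OF fin ne] IH in auto)
      qed
      have EL_ES: "EL x \<le> ES x" if x: "x \<in> space P" for x
      proof -
        interpret prob_space "K x" by (rule K_facts[OF K x])
        show ?thesis unfolding ES_def EL_def
          by (rule integral_mono) (use EK_int(1)[OF K x _ fin ne] fare_nonneg x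
              Vc_mono[OF fin ne] IH in auto)
      qed
      define h where "h x = max (u x + ES x - Vs F) 0 - max (u x) 0" for x
      note [measurable] = u ES_m EU_m EL_m
      have h_m: "h \<in> borel_measurable P" unfolding h_def by measurable
      have h_int: "integrable P h"
        by (rule bdd_int[OF P h_m, where B="vb Vs C + \<bar>Vs F\<bar>"])
           (use ES_b h_abs in \<open>fastforce simp: h_def intro: order.trans\<close>)
      have VsC: "Vs C = Vs F + lam * (\<integral>x. h x \<partial>P)"
        using Vs_eq cs unfolding F_def h_def ES_def by auto
      define IU where "IU x = (if 0 \<le> u x + ES x - Vs F then 1 else 0::real)" for x
      define aU where "aU x = IU x * (EU x - VU F)" for x
      have aU_m: "aU \<in> borel_measurable P" unfolding aU_def IU_def by measurable
      have aU_int: "integrable P aU"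
        by (rule bdd_int[OF P aU_m, where B="vb VU C + \<bar>VU F\<bar>"])
           (use EU_b in \<open>auto simp: aU_def IU_def abs_mult intro: order.trans[OF abs_triangle_ineq4] add_right_mono\<close>)
      have VUC: "VU C = VU F + lam * (\<integral>x. aU x \<partial>P)"
      proof -
        have "VU C = VU F + lam * (\<integral>x. IU x * (\<integral>p. Vc VU p C - VU F \<partial>K x) \<partial>P)"
          using VU_eq cs unfolding F_def IU_def ES_def Ex1_def by auto
        also have "(\<integral>x. IU x * (\<integral>p. Vc VU p C - VU F \<partial>K x) \<partial>P) = (\<integral>x. aU x \<partial>P)"
          by (rule Bochner_Integration.integral_cong[OF refl]) (use EK_int(3)[OF K _ _ fin ne] fare_nonneg in \<open>auto simp: aU_def EU_def\<close>)
        finally show ?thesis .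
      qed
      have "(\<integral>x. h x + (Vs F - VU F) \<partial>P) \<le> (\<integral>x. aU x \<partial>P)"
      proof (rule integral_mono)
        show "integrable P (\<lambda>x. h x + (Vs F - VU F))" using h_int by simp
        show "integrable P aU" by (rule aU_int)
        fix x assume x: "x \<in> space P"
        have "h x \<le> IU x * (ES x - Vs F)"
          unfolding h_def IU_def using h_upper[of "u x" "ES x - Vs F"] by (simp add: algebra_simps)
        then show "h x + (Vs F - VU F) \<le> aU x"
          unfolding aU_def using ES_EU[OF x] IHF by (auto simp: IU_def)
      qed
      then have upI: "(\<integral>x. h x \<partial>P) + (Vs F - VU F) \<le> (\<integral>x. aU x \<partial>P)"
        using h_int by (simp add: PS.prob_space)
      have "lam * ((\<integral>x. h x \<partial>P) - (\<integral>x. aU x \<partial>P)) \<le> lam * (VU F - Vs F)"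
        using upI lam by (intro mult_left_mono) auto
      moreover have "lam * (VU F - Vs F) \<le> VU F - Vs F" using lam IHF
        by (simp add: mult_left_le_one_le)
      ultimately have up: "Vs C \<le> VU C" using VsC VUC by (simp add: algebra_simps)
      define I0 where "I0 x = (if 0 \<le> u x then 1 else 0::real)" for x
      define aL where "aL x = I0 x * (EL x - VL F)" for x
      have aL_m: "aL \<in> borel_measurable P" unfolding aL_def I0_def by measurable
      have aL_int: "integrable P aL"
        by (rule bdd_int[OF P aL_m, where B="vb VL C + \<bar>VL F\<bar>"])
           (use EL_b in \<open>auto simp: aL_def I0_def abs_mult intro: order.trans[OF abs_triangle_ineq4] add_right_mono\<close>)
      have E0: "(\<integral>p. Vc Vs p C0 \<partial>K x) = 0" if x: "x \<in> space P" for x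
      proof -
        have "AE p in K x. Vc Vs p C0 = 0"
          using fare_nonneg x by (auto simp: Vc_C0 Vs_C0 elim!: AE_mp)
        then show ?thesis by (rule integral_eq_zero_AE)
      qed
      have VLC: "VL C = VL F + lam * (\<integral>x. aL x \<partial>P)"
      proof -
        have "VL C = VL F + lam * (\<integral>x. (if 0 \<le> u x + (\<integral>p. Vc Vs p C0 \<partial>K x) - Vs (fC C0) then 1 else 0)
               * (\<integral>p. Vc VL p C - VL F \<partial>K x) \<partial>P)"
          using VL_eq cs unfolding F_def Ex1_def by auto
        also have "(\<integral>x. (if 0 \<le> u x + (\<integral>p. Vc Vs p C0 \<partial>K x) - Vs (fC C0) then 1 else 0)
               * (\<integral>p. Vc VL p C - VL F \<partial>K x) \<partial>P) = (\<integral>x. aL x \<partial>P)"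
          by (rule Bochner_Integration.integral_cong[OF refl])
             (use EK_int(3)[OF K _ _ fin ne] fare_nonneg E0 in \<open>auto simp: aL_def EL_def I0_def fC_C0 Vs_C0\<close>)
        finally show ?thesis .
      qed
      have "(\<integral>x. aL x + (VL F - Vs F) \<partial>P) \<le> (\<integral>x. h x \<partial>P)"
      proof (rule integral_mono)
        show "integrable P (\<lambda>x. aL x + (VL F - Vs F))" using aL_int by simp
        show "integrable P h" by (rule h_int)
        fix x assume x: "x \<in> space P"
        have "I0 x * (ES x - Vs F) \<le> h x"
          unfolding h_def I0_def using h_lower[of "u x" "ES x - Vs F"] by (simp add: algebra_simps)
        then show "aL x + (VL F - Vs F) \<le> h x"
          unfolding aL_def using EL_ES[OF x] IHF by (auto simp: I0_def)
      qed
      then have loI: "(\<integral>x. aL x \<partial>P) + (VL F - Vs F) \<le> (\<integral>x. h x \<partial>P)"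
        using aL_int by (simp add: PS.prob_space)
      have "lam * ((\<integral>x. aL x \<partial>P) - (\<integral>x. h x \<partial>P)) \<le> lam * (Vs F - VL F)"
        using loI lam by (intro mult_left_mono) auto
      moreover have "lam * (Vs F - VL F) \<le> Vs F - VL F" using lam IHF
        by (simp add: mult_left_le_one_le)
      ultimately have lo: "VL C \<le> Vs C" using VsC VLC by (simp add: algebra_simps)
      show ?thesis using lo up by simp
    qed
  qed
qed

end
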